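(* Let $0<a,b<1$, $r>as$, $s>br$, and consider the autonomous system $(x_{n+1},y_{n+1})=T_{\alpha,\beta}(x_n,y_n)$ with constant $\alpha,\beta\in[0,1)$. (a) If $p_\alpha+q_\beta<4$ and $2-p_\alpha-q_\beta+\frac{p_\alpha q_\beta(1-ab)}{2}>0$, then the positive equilibrium $K=(p,q)$ is locally asymptotically stable. (b) If $\alpha\in(\alpha_*,1)$ and $\beta\in(\beta_*,1)$, where $$\alpha_*=\max\{1-2/p,\,0\},\qquad \beta_*=\max\Big\{1-\frac{2}{q(1-ab)}-\frac{4ab}{q(1-ab)[(1-\alpha)(1-ab)p-2]},\,0\Big\}\in[0,1),$$ then both inequalities in (a) hold, so $K$ is locally asymptotically stable.
   Context: $p=\frac{r-as}{1-ab}$, $q=\frac{s-br}{1-ab}$, $K=(p,q)$. $T_{\alpha,\beta}(x,y)=\big(x[(1-\alpha)e^{r-x-ay}+\alpha],\,y[(1-\beta)e^{s-bx-y}+\beta]\big)$. $p_\alpha=(1-\alpha)p$, $q_\beta=(1-\beta)q$. *)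

theory Defs
  imports "HOL-Analysis.Analysis"
begin

definition Tmap :: "real \<Rightarrow> real \<Rightarrow> real \<Rightarrow> real \<Rightarrow> real \<Rightarrow> real \<Rightarrow> real \<times> real \<Rightarrow> real \<times> real" where
  "Tmap a b r s \<alpha> \<beta> = (\<lambda>(x, y).
     (x * ((1 - \<alpha>) * exp (r - x - a * y) + \<alpha>),
      y * ((1 - \<beta>) * exp (s - b * x - y) + \<beta>)))"

definition eq_p :: "real \<Rightarrow> real \<Rightarrow> real \<Rightarrow> real \<Rightarrow> real" where
  "eq_p a b r s = (r - a * s) / (1 - a * b)"

definition eq_q :: "real \<Rightarrow> real \<Rightarrow> real \<Rightarrow> real \<Rightarrow> real" where
  "eq_q a b r s = (s - b * r) / (1 - a * b)"

definition loc_asym_stable :: "('a::metric_space \<Rightarrow> 'a) \<Rightarrow> 'a \<Rightarrow> bool" where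
  "loc_asym_stable f K \<longleftrightarrow>
     f K = K \<and>
     (\<forall>\<epsilon>>0. \<exists>\<delta>>0. \<forall>z. dist z K < \<delta> \<longrightarrow> (\<forall>n. dist ((f ^^ n) z) K < \<epsilon>)) \<and>
     (\<exists>\<eta>>0. \<forall>z. dist z K < \<eta> \<longrightarrow> (\<lambda>n. (f ^^ n) z) \<longlonglongrightarrow> K)"

end

theory Submission
  imports Defs
begin

lemma contract_stable:
  fixes f :: "'a::real_normed_vector \<Rightarrow> 'a" and V :: "'a \<Rightarrow> real"
  assumes fK: "f K = K" and m: "0 < m" "m \<le> M"
   and Vl: "\<And>w. m * norm w ^ 2 \<le> V w" and Vu: "\<And>w. V w \<le> M * norm w ^ 2"
   and d0: "0 < d0" and mu: "0 \<le> \<mu>" "\<mu> < 1"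
   and contr: "\<And>z. norm (z - K) < d0 \<Longrightarrow> V (f z - K) \<le> \<mu> * V (z - K)"
  shows "loc_asym_stable f K"
proof -
  have M: "0 < M" using m by linarith
  define d1 where "d1 = d0 * m / M"
  have mM: "m / M \<le> 1" using m M by simp
  have d1: "0 < d1" "d1 \<le> d0"
  proof -
    show "0 < d1" using m M d0 by (simp add: d1_def)
    have "d1 = d0 * (m / M)" by (simp add: d1_def)
    also have "\<dots> \<le> d0 * 1" using mM d0 by (intro mult_left_mono) auto
    finally show "d1 \<le> d0" by simp
  qed
  have d1sq: "M * d1^2 \<le> m * d0^2"
  proof -
    have "M * d1^2 = m * d0^2 * (m / M)" using M by (simp add: d1_def power2_eq_square field_simps)
    also have "\<dots> \<le> m * d0^2 * 1" using m M d0 by (intro mult_left_mono) auto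
    finally show ?thesis by simp
  qed
  have Vnn: "0 \<le> V w" for w using Vl[of w] m by (metis dual_order.trans less_le_not_le mult_nonneg_nonneg zero_le_power2)
  have key: "V ((f^^n) z - K) \<le> \<mu>^n * V (z - K) \<and> norm ((f^^n) z - K) < d0"
    if z: "norm (z - K) < d1" for z n
  proof (induction n)
    case 0
    then show ?case using z d1 by simp
  next
    case (Suc n)
    have A: "V ((f^^Suc n) z - K) \<le> \<mu>^Suc n * V (z - K)"
    proof -
      have "V ((f^^Suc n) z - K) = V (f ((f^^n) z) - K)" by simp
      also have "\<dots> \<le> \<mu> * V ((f^^n) z - K)" using contr Suc by blast
      also have "\<dots> \<le> \<mu> * (\<mu>^n * V (z - K))" using Suc mu by (intro mult_left_mono) auto
      finally show ?thesis by simp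
    qed
    have "m * norm ((f^^Suc n) z - K)^2 \<le> \<mu>^Suc n * V (z - K)" using A Vl order_trans by blast
    also have "\<dots> \<le> 1 * V (z - K)" using mu Vnn by (intro mult_right_mono power_le_one) auto
    also have "\<dots> \<le> M * norm (z - K)^2" using Vu by simp
    also have "\<dots> < M * d1^2" using z M by (intro mult_strict_left_mono power_strict_mono) auto
    also have "\<dots> \<le> m * d0^2" by (rule d1sq)
    finally have "norm ((f^^Suc n) z - K)^2 < d0^2" using m by simp
    hence "norm ((f^^Suc n) z - K) < d0" using d0 by (simp add: power_less_imp_less_base)
    with A show ?case by blast
  qed
  have bound: "m * norm ((f^^n) z - K)^2 \<le> \<mu>^n * (M * norm (z - K)^2)"
    if z: "norm (z - K) < d1" for z n
  proof -
    have "m * norm ((f^^n) z - K)^2 \<le> \<mu>^n * V (z - K)" using key[OF z, of n] Vl order_trans by blast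
    also have "\<dots> \<le> \<mu>^n * (M * norm (z - K)^2)" using Vu mu by (intro mult_left_mono) auto
    finally show ?thesis .
  qed
  have stab: "\<exists>\<delta>>0. \<forall>z. dist z K < \<delta> \<longrightarrow> (\<forall>n. dist ((f ^^ n) z) K < \<epsilon>)" if e: "\<epsilon> > 0" for \<epsilon>
  proof (intro exI[of _ "min d1 (\<epsilon> * m / M)"] conjI allI impI)
    show "0 < min d1 (\<epsilon> * m / M)" using d1 e m M by auto
    fix z n assume "dist z K < min d1 (\<epsilon> * m / M)"
    hence z1: "norm (z - K) < d1" and z2: "norm (z - K) < \<epsilon> * m / M" by (auto simp: dist_norm)
    have "m * norm ((f^^n) z - K)^2 \<le> \<mu>^n * (M * norm (z - K)^2)" by (rule bound[OF z1])
    also have "\<dots> \<le> 1 * (M * norm (z - K)^2)" using mu M by (intro mult_right_mono power_le_one) auto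
    also have "\<dots> < M * (\<epsilon> * m / M)^2" using z2 M by (simp add: power_strict_mono)
    also have "\<dots> = m * \<epsilon>^2 * (m / M)" using M by (simp add: power2_eq_square field_simps)
    also have "\<dots> \<le> m * \<epsilon>^2 * 1" using m M e by (intro mult_left_mono) auto
    finally have "norm ((f^^n) z - K)^2 < \<epsilon>^2" using m by simp
    hence "norm ((f^^n) z - K) < \<epsilon>" using e by (simp add: power_less_imp_less_base)
    thus "dist ((f ^^ n) z) K < \<epsilon>" by (simp add: dist_norm)
  qed
  have conv: "\<exists>\<eta>>0. \<forall>z. dist z K < \<eta> \<longrightarrow> (\<lambda>n. (f ^^ n) z) \<longlonglongrightarrow> K"
  proof (intro exI[of _ d1] conjI allI impI)
    show "0 < d1" by (rule d1)
    fix z assume "dist z K < d1"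
    hence z: "norm (z - K) < d1" by (simp add: dist_norm)
    define C where "C = M * norm (z - K)^2 / m"
    have le: "norm ((f^^n) z - K) \<le> sqrt (\<mu>^n * C)" for n
    proof -
      have "norm ((f^^n) z - K)^2 \<le> \<mu>^n * C"
        using bound[OF z, of n] m by (simp add: C_def field_simps)
      thus ?thesis by (simp add: real_le_rsqrt)
    qed
    have "(\<lambda>n. \<mu>^n * C) \<longlonglongrightarrow> 0 * C"
      using mu by (intro tendsto_mult LIMSEQ_power_zero tendsto_const) auto
    hence lim0: "(\<lambda>n. sqrt (\<mu>^n * C)) \<longlonglongrightarrow> 0" using tendsto_real_sqrt by fastforce
    have ev: "eventually (\<lambda>n. norm ((f^^n) z - K) \<le> sqrt (\<mu>^n * C)) sequentially"
      using le by (simp add: always_eventually)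
    have "(\<lambda>n. (f^^n) z - K) \<longlonglongrightarrow> 0" by (rule Lim_null_comparison[OF ev lim0])
    thus "(\<lambda>n. (f ^^ n) z) \<longlonglongrightarrow> K" by (rule LIM_zero_cancel)
  qed
  show ?thesis unfolding loc_asym_stable_def using fK stab conv by blast
qed


lemma lin_contract:
  fixes f :: "'a::real_normed_vector \<Rightarrow> 'a" and V :: "'a \<Rightarrow> real" and L :: "'a \<Rightarrow> 'a"
  assumes der: "\<forall>e>0. \<exists>d>0. \<forall>z. norm (z - K) < d \<longrightarrow> norm (f z - K - L (z - K)) \<le> e * norm (z - K)"
  and m: "0 < m" and Vl: "\<And>w. m * norm w ^ 2 \<le> V w"
  and VL: "\<And>w. V (L w) \<le> \<mu> * V w" and mu: "0 \<le> \<mu>" "\<mu> < 1"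
  and LB: "\<And>w. norm (L w) \<le> CL * norm w" and CL: "0 \<le> CL"
  and pert: "\<And>x e. V (x + e) \<le> V x + C * (norm x * norm e) + C * norm e ^ 2" and C: "0 < C"
  shows "\<exists>d0>0. \<forall>z. norm (z - K) < d0 \<longrightarrow> V (f z - K) \<le> ((1 + \<mu>) / 2) * V (z - K)"
proof -
  define \<epsilon> where "\<epsilon> = min 1 ((1 - \<mu>) * m / (2 * C * (CL + 1)))"
  have e0: "0 < \<epsilon>" using mu m C CL by (simp add: \<epsilon>_def)
  have e1: "\<epsilon> \<le> 1" by (simp add: \<epsilon>_def)
  have e2: "C * (CL + 1) * \<epsilon> \<le> (1 - \<mu>) / 2 * m"
  proof -
    have pos: "0 < 2 * C * (CL + 1)" using C CL by simp
    have "\<epsilon> \<le> (1 - \<mu>) * m / (2 * C * (CL + 1))" by (simp add: \<epsilon>_def)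
    hence "\<epsilon> * (2 * C * (CL + 1)) \<le> (1 - \<mu>) * m" using pos by (simp add: pos_le_divide_eq)
    thus ?thesis by (simp add: algebra_simps)
  qed
  obtain d where d: "d > 0" and dd: "\<And>z. norm (z - K) < d \<Longrightarrow> norm (f z - K - L (z - K)) \<le> \<epsilon> * norm (z - K)"
    using der e0 by blast
  show ?thesis
  proof (intro exI[of _ d] conjI allI impI)
    show "0 < d" by (rule d)
    fix z assume z: "norm (z - K) < d"
    define w where "w = z - K"
    define e where "e = f z - K - L w"
    have ne: "norm e \<le> \<epsilon> * norm w" using dd[OF z] by (simp add: e_def w_def)
    have nLw: "norm (L w) \<le> CL * norm w" by (rule LB)
    have fz: "f z - K = L w + e" by (simp add: e_def)
    have "V (f z - K) \<le> V (L w) + C * (norm (L w) * norm e) + C * norm e ^ 2"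
      unfolding fz by (rule pert)
    also have "\<dots> \<le> \<mu> * V w + C * ((CL * norm w) * (\<epsilon> * norm w)) + C * (\<epsilon> * norm w) ^ 2"
    proof -
      have a1: "norm (L w) * norm e \<le> (CL * norm w) * (\<epsilon> * norm w)"
        using nLw ne CL by (intro mult_mono) auto
      have a2: "norm e ^ 2 \<le> (\<epsilon> * norm w) ^ 2" using ne by (intro power_mono) auto
      show ?thesis using VL[of w] mult_left_mono[OF a1, of C] mult_left_mono[OF a2, of C] C by linarith
    qed
    also have "\<dots> = \<mu> * V w + C * (CL + \<epsilon>) * \<epsilon> * norm w ^ 2"
      by (simp add: power2_eq_square algebra_simps)
    also have "\<dots> \<le> \<mu> * V w + C * (CL + 1) * \<epsilon> * norm w ^ 2"
      using e0 e1 C by (intro add_left_mono mult_right_mono mult_left_mono) auto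
    also have "\<dots> \<le> \<mu> * V w + (1 - \<mu>) / 2 * m * norm w ^ 2"
      using e2 by (intro add_left_mono mult_right_mono) auto
    also have "\<dots> \<le> \<mu> * V w + (1 - \<mu>) / 2 * V w"
      using Vl[of w] mu by (simp add: mult.assoc mult_left_mono)
    also have "\<dots> = ((1 + \<mu>) / 2) * V w" by (simp add: field_simps)
    finally show "V (f z - K) \<le> ((1 + \<mu>) / 2) * V (z - K)" by (simp add: w_def)
  qed
qed



definition QF :: "real \<Rightarrow> real \<Rightarrow> real \<Rightarrow> real \<times> real \<Rightarrow> real" where
  "QF al be ga w = al * (fst w)^2 + 2 * be * fst w * snd w + ga * (snd w)^2"

lemma norm_sq_pair: "norm (w::real \<times> real) ^ 2 = (fst w)^2 + (snd w)^2"
  by (cases w) (simp add: norm_Pair)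

lemma abs_fst_le: "\<bar>fst (w::real \<times> real)\<bar> \<le> norm w"
  by (cases w) (metis fst_conv norm_fst_le real_norm_def)

lemma abs_snd_le: "\<bar>snd (w::real \<times> real)\<bar> \<le> norm w"
  by (cases w) (metis snd_conv norm_snd_le real_norm_def)

lemma abs_bound: "\<bar>P\<bar> \<le> N \<Longrightarrow> (t::real) * P \<le> \<bar>t\<bar> * N"
proof -
  assume h: "\<bar>P\<bar> \<le> N"
  have "t * P \<le> \<bar>t * P\<bar>" by simp
  also have "\<dots> = \<bar>t\<bar> * \<bar>P\<bar>" by (simp add: abs_mult)
  also have "\<dots> \<le> \<bar>t\<bar> * N" using h by (intro mult_left_mono) auto
  finally show ?thesis .
qed

lemma QF_upper: "QF al be ga w \<le> (\<bar>al\<bar> + \<bar>be\<bar> + \<bar>ga\<bar>) * norm w ^ 2"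
proof -
  obtain x y where w: "w = (x, y)" by (cases w)
  have n: "norm w ^ 2 = x^2 + y^2" using norm_sq_pair[of w] w by simp
  have h1: "al * x^2 \<le> \<bar>al\<bar> * (x^2 + y^2)" by (rule abs_bound) simp
  have h2: "ga * y^2 \<le> \<bar>ga\<bar> * (x^2 + y^2)" by (rule abs_bound) simp
  have "\<bar>2 * x * y\<bar> \<le> x^2 + y^2"
    using sum_squares_bound[of x y] sum_squares_bound[of x "-y"]
    by (simp add: abs_if)
  hence h3: "be * (2 * x * y) \<le> \<bar>be\<bar> * (x^2 + y^2)" by (rule abs_bound)
  have "QF al be ga w = al * x^2 + be * (2 * x * y) + ga * y^2" by (simp add: QF_def w)
  also have "\<dots> \<le> (\<bar>al\<bar> + \<bar>be\<bar> + \<bar>ga\<bar>) * (x^2 + y^2)" using h1 h2 h3 by (simp add: algebra_simps)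
  finally show ?thesis using n by simp
qed

lemma QF_lower:
  assumes "al + ga > 0"
  shows "(al * ga - be^2) / (al + ga) * norm w ^ 2 \<le> QF al be ga w"
proof -
  obtain x y where w: "w = (x, y)" by (cases w)
  have n: "norm w ^ 2 = x^2 + y^2" using norm_sq_pair[of w] w by simp
  have id: "(al + ga) * QF al be ga w - (al * ga - be^2) * (x^2 + y^2) = (al*x + be*y)^2 + (be*x + ga*y)^2"
    by (simp add: QF_def w power2_eq_square algebra_simps)
  have "(al * ga - be^2) * (x^2 + y^2) \<le> (al + ga) * QF al be ga w" using id
    by (smt (verit) zero_le_power2)
  hence "(al * ga - be^2) * (x^2 + y^2) / (al + ga) \<le> QF al be ga w" using assms
    by (simp add: divide_le_eq mult.commute)
  thus ?thesis using n by (simp add: field_simps)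
qed

lemma QF_pert:
  "QF al be ga (x + e) \<le> QF al be ga x + (4 * (\<bar>al\<bar> + \<bar>be\<bar> + \<bar>ga\<bar>)) * (norm x * norm e)
     + (4 * (\<bar>al\<bar> + \<bar>be\<bar> + \<bar>ga\<bar>)) * norm e ^ 2"
proof -
  define G where "G = \<bar>al\<bar> + \<bar>be\<bar> + \<bar>ga\<bar>"
  have G0: "0 \<le> G" by (simp add: G_def)
  define N where "N = norm x * norm e"
  have b: "\<bar>u * v\<bar> \<le> N" if "\<bar>u\<bar> \<le> norm x" "\<bar>v\<bar> \<le> norm e" for u v
    unfolding N_def abs_mult using that by (intro mult_mono) auto
  have b11: "\<bar>fst x * fst e\<bar> \<le> N" by (rule b) (simp_all add: abs_fst_le)
  have b12: "\<bar>fst x * snd e\<bar> \<le> N" by (rule b) (simp_all add: abs_fst_le abs_snd_le)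
  have b21: "\<bar>snd x * fst e\<bar> \<le> N" by (rule b) (simp_all add: abs_fst_le abs_snd_le)
  have b22: "\<bar>snd x * snd e\<bar> \<le> N" by (rule b) (simp_all add: abs_snd_le)
  have id: "QF al be ga (x + e) = QF al be ga x + 2 * (al * (fst x * fst e)) + 2 * (be * (fst x * snd e))
      + 2 * (be * (snd x * fst e)) + 2 * (ga * (snd x * snd e)) + QF al be ga e"
    by (simp add: QF_def power2_eq_square algebra_simps)
  have t1: "al * (fst x * fst e) \<le> \<bar>al\<bar> * N" by (rule abs_bound[OF b11])
  have t2: "be * (fst x * snd e) \<le> \<bar>be\<bar> * N" by (rule abs_bound[OF b12])
  have t3: "be * (snd x * fst e) \<le> \<bar>be\<bar> * N" by (rule abs_bound[OF b21])
  have t4: "ga * (snd x * snd e) \<le> \<bar>ga\<bar> * N" by (rule abs_bound[OF b22])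
  have t5: "QF al be ga e \<le> G * norm e ^ 2" unfolding G_def by (rule QF_upper)
  have N0: "0 \<le> N" by (simp add: N_def)
  have "QF al be ga (x + e) \<le> QF al be ga x + 2 * (\<bar>al\<bar> + 2 * \<bar>be\<bar> + \<bar>ga\<bar>) * N + G * norm e ^ 2"
    using id t1 t2 t3 t4 t5 by (simp add: algebra_simps)
  also have "\<dots> \<le> QF al be ga x + (4 * G) * N + (4 * G) * norm e ^ 2"
    using G0 N0 by (intro add_mono order_refl mult_right_mono) (auto simp: G_def)
  finally show ?thesis by (simp add: G_def N_def)
qed

lemma stein_id:
  fixes t d u v :: real
  defines "k \<equiv> (1 - d) * ((1 + d)^2 - t^2) / 2"
  shows "QF (k + (1 + d) * d^2) (- (t * d)) (1 + d) (v, t * v - d * u)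
       = QF (k + (1 + d) * d^2) (- (t * d)) (1 + d) (u, v) - k * (u^2 + v^2)"
  unfolding k_def QF_def by (simp add: power2_eq_square field_simps)

lemma det_id:
  fixes A B D l11 l12 :: real
  shows "(A + 2*B*l11 + D*l11^2) * (D * l12^2) - (B*l12 + D*l11*l12)^2 = l12^2 * (A*D - B^2)"
  by (simp add: power2_eq_square algebra_simps)

lemma form_id:
  fixes A B D l11 l12 :: real
  shows "QF (A + 2*B*l11 + D*l11^2) (B*l12 + D*l11*l12) (D * l12^2) w = QF A B D (fst w, l11 * fst w + l12 * snd w)"
  by (simp add: QF_def power2_eq_square algebra_simps)

definition Lmap :: "real \<Rightarrow> real \<Rightarrow> real \<Rightarrow> real \<Rightarrow> real \<times> real \<Rightarrow> real \<times> real" where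
  "Lmap l11 l12 l21 l22 w = (l11 * fst w + l12 * snd w, l21 * fst w + l22 * snd w)"

lemma stable_from_lin:
  fixes f :: "real \<times> real \<Rightarrow> real \<times> real"
  assumes fK: "f K = K"
  and der: "\<forall>e>0. \<exists>d>0. \<forall>z. norm (z - K) < d \<longrightarrow> norm (f z - K - Lmap l11 l12 l21 l22 (z - K)) \<le> e * norm (z - K)"
  and l12: "l12 \<noteq> 0"
  and j1: "1 + (l11*l22 - l12*l21) - (l11 + l22) > 0"
  and j2: "1 + (l11*l22 - l12*l21) + (l11 + l22) > 0"
  and j3: "1 - (l11*l22 - l12*l21) > 0"
  shows "loc_asym_stable f K"
proof -
  define t where "t = l11 + l22"
  define d where "d = l11*l22 - l12*l21"
  define k where "k = (1 - d) * ((1 + d)^2 - t^2) / 2"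
  define A1 where "A1 = k + (1 + d) * d^2"
  define B1 where "B1 = - (t * d)"
  define D1 where "D1 = 1 + d"
  have j1': "1 + d - t > 0" and j2': "1 + d + t > 0" and j3': "1 - d > 0"
    using j1 j2 j3 by (simp_all add: t_def d_def)
  have sq: "(1 + d)^2 - t^2 = (1 + d - t) * (1 + d + t)" by (simp add: power2_eq_square algebra_simps)
  have sq0: "(1 + d)^2 - t^2 > 0" using sq j1' j2' by simp
  have k0: "k > 0" using sq0 j3' by (simp add: k_def)
  have D0: "D1 > 0" using j1' j2' by (simp add: D1_def)
  have "D1 * d^2 \<ge> 0" using D0 by simp
  hence A0: "A1 > 0" using k0 by (simp add: A1_def D1_def)
  have det0: "A1 * D1 - B1^2 > 0"
  proof -
    have "A1 * D1 - B1^2 = k * D1 + d^2 * ((1 + d)^2 - t^2)"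
      by (simp add: A1_def B1_def D1_def power2_eq_square algebra_simps)
    moreover have "k * D1 > 0" using k0 D0 by simp
    moreover have "d^2 * ((1 + d)^2 - t^2) \<ge> 0" using sq0 by simp
    ultimately show ?thesis by linarith
  qed
  define al where "al = A1 + 2*B1*l11 + D1*l11^2"
  define be where "be = B1*l12 + D1*l11*l12"
  define ga where "ga = D1 * l12^2"
  define V where "V = QF al be ga"
  define uv where "uv = (\<lambda>w::real\<times>real. (fst w, l11 * fst w + l12 * snd w))"
  have Vform: "V w = QF A1 B1 D1 (uv w)" for w
    unfolding V_def al_def be_def ga_def uv_def by (rule form_id)
  have ga0: "ga > 0" using D0 l12 by (simp add: ga_def)
  have detV: "al * ga - be^2 > 0"
    using det_id[of A1 B1 l11 D1 l12] det0 l12 by (simp add: al_def be_def ga_def)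
  have al0: "al > 0"
  proof -
    have "al * ga > 0" using detV by (smt (verit) zero_le_power2)
    thus ?thesis using ga0 by (simp add: zero_less_mult_iff)
  qed
  define m where "m = (al * ga - be^2) / (al + ga)"
  define M where "M = \<bar>al\<bar> + \<bar>be\<bar> + \<bar>ga\<bar>"
  have m0: "0 < m" using detV al0 ga0 by (simp add: m_def)
  have Vl: "m * norm w ^ 2 \<le> V w" for w
    unfolding m_def V_def using al0 ga0 by (intro QF_lower) simp
  have Vu: "V w \<le> M * norm w ^ 2" for w unfolding V_def M_def by (rule QF_upper)
  have mM: "m \<le> M" using Vl[of "(1,0)"] Vu[of "(1,0)"] by simp
  define MC where "MC = \<bar>A1\<bar> + \<bar>B1\<bar> + \<bar>D1\<bar>"
  have MC0: "MC > 0" using A0 by (simp add: MC_def)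
  define \<mu> where "\<mu> = max 0 (1 - k / MC)"
  have mu: "0 \<le> \<mu>" "\<mu> < 1" using k0 MC0 by (auto simp: \<mu>_def)
  have QCnn: "0 \<le> QF A1 B1 D1 x" for x
  proof -
    have "(A1 * D1 - B1^2) / (A1 + D1) * norm x ^ 2 \<le> QF A1 B1 D1 x"
      using A0 D0 by (intro QF_lower) simp
    moreover have "0 \<le> (A1 * D1 - B1^2) / (A1 + D1) * norm x ^ 2" using det0 A0 D0 by simp
    ultimately show ?thesis by linarith
  qed
  have VL: "V (Lmap l11 l12 l21 l22 w) \<le> \<mu> * V w" for w
  proof -
    define u where "u = fst w"
    define v where "v = l11 * fst w + l12 * snd w"
    have uvw: "uv w = (u, v)" by (simp add: uv_def u_def v_def)
    have uvL: "uv (Lmap l11 l12 l21 l22 w) = (v, t * v - d * u)"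
      by (simp add: uv_def Lmap_def u_def v_def t_def d_def algebra_simps)
    have "V (Lmap l11 l12 l21 l22 w) = QF A1 B1 D1 (u, v) - k * (u^2 + v^2)"
      unfolding Vform uvL A1_def B1_def D1_def k_def by (rule stein_id)
    also have "\<dots> \<le> QF A1 B1 D1 (u, v) - k * (QF A1 B1 D1 (u, v) / MC)"
    proof -
      have "QF A1 B1 D1 (u, v) \<le> MC * (u^2 + v^2)"
        using QF_upper[of A1 B1 D1 "(u, v)"] by (simp add: MC_def norm_sq_pair)
      hence "QF A1 B1 D1 (u, v) / MC \<le> u^2 + v^2" using MC0 by (simp add: divide_le_eq mult.commute)
      hence "k * (QF A1 B1 D1 (u, v) / MC) \<le> k * (u^2 + v^2)" using k0 by (intro mult_left_mono) auto
      thus ?thesis by linarith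
    qed
    also have "\<dots> = (1 - k / MC) * QF A1 B1 D1 (u, v)" by (simp add: algebra_simps)
    also have "\<dots> \<le> \<mu> * QF A1 B1 D1 (u, v)" using QCnn by (intro mult_right_mono) (auto simp: \<mu>_def)
    finally show ?thesis using Vform[of w] uvw by simp
  qed
  define CL where "CL = \<bar>l11\<bar> + \<bar>l12\<bar> + \<bar>l21\<bar> + \<bar>l22\<bar>"
  have LB: "norm (Lmap l11 l12 l21 l22 w) \<le> CL * norm w" for w
  proof -
    have r: "\<bar>p1 * fst w + p2 * snd w\<bar> \<le> (\<bar>p1\<bar> + \<bar>p2\<bar>) * norm w" for p1 p2
    proof -
      have "\<bar>p1 * fst w + p2 * snd w\<bar> \<le> \<bar>p1\<bar> * \<bar>fst w\<bar> + \<bar>p2\<bar> * \<bar>snd w\<bar>"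
        by (metis abs_mult abs_triangle_ineq)
      also have "\<dots> \<le> \<bar>p1\<bar> * norm w + \<bar>p2\<bar> * norm w"
        by (intro add_mono mult_left_mono abs_fst_le abs_snd_le) auto
      finally show ?thesis by (simp add: algebra_simps)
    qed
    have "norm (Lmap l11 l12 l21 l22 w) \<le> norm (l11 * fst w + l12 * snd w) + norm (l21 * fst w + l22 * snd w)"
      unfolding Lmap_def by (rule norm_Pair_le)
    also have "\<dots> \<le> (\<bar>l11\<bar> + \<bar>l12\<bar>) * norm w + (\<bar>l21\<bar> + \<bar>l22\<bar>) * norm w"
      using r[of l11 l12] r[of l21 l22] by simp
    finally show ?thesis by (simp add: CL_def algebra_simps)
  qed
  have CL0: "0 \<le> CL" by (simp add: CL_def)
  have pert: "V (x + e) \<le> V x + (4 * M) * (norm x * norm e) + (4 * M) * norm e ^ 2" for x e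
    unfolding V_def M_def by (rule QF_pert)
  have C0: "0 < 4 * M" using m0 mM by simp
  obtain d0 where d0: "d0 > 0"
    and contr: "\<forall>z. norm (z - K) < d0 \<longrightarrow> V (f z - K) \<le> ((1 + \<mu>) / 2) * V (z - K)"
    using lin_contract[OF der m0 Vl VL mu LB CL0 pert C0] by blast
  show ?thesis
    by (rule contract_stable[of f K m M V d0 "(1 + \<mu>) / 2"])
      (use fK m0 mM Vl Vu d0 mu contr in auto)
qed


lemma Tmap_eq: "Tmap a b r s \<alpha> \<beta> z = (fst z * ((1 - \<alpha>) * exp (r - fst z - a * snd z) + \<alpha>),
      snd z * ((1 - \<beta>) * exp (s - b * fst z - snd z) + \<beta>))"
  by (cases z) (simp add: Tmap_def)

lemma partA:
  fixes a b r s \<alpha> \<beta> :: real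
  assumes "0 < a" "a < 1" "0 < b" "b < 1"
    and "r > a * s" "s > b * r"
    and "0 \<le> \<alpha>" "\<alpha> < 1" "0 \<le> \<beta>" "\<beta> < 1"
    and h1: "(1 - \<alpha>) * eq_p a b r s + (1 - \<beta>) * eq_q a b r s < 4"
    and h2: "2 - (1 - \<alpha>) * eq_p a b r s - (1 - \<beta>) * eq_q a b r s
              + (1 - \<alpha>) * eq_p a b r s * ((1 - \<beta>) * eq_q a b r s) * (1 - a * b) / 2 > 0"
  shows "loc_asym_stable (Tmap a b r s \<alpha> \<beta>) (eq_p a b r s, eq_q a b r s)"
proof -
  define p where "p = eq_p a b r s"
  define q where "q = eq_q a b r s"
  define c where "c = 1 - a * b"
  define P where "P = (1 - \<alpha>) * p"
  define Q where "Q = (1 - \<beta>) * q"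
  have "a * b < 1 * 1" using assms by (intro mult_strict_mono) auto
  hence ab: "a * b < 1" by simp
  have c0: "0 < c" "c < 1" using ab assms by (auto simp: c_def)
  have p0: "p > 0" using assms c0 by (simp add: p_def eq_p_def c_def[symmetric])
  have q0: "q > 0" using assms c0 by (simp add: q_def eq_q_def c_def[symmetric])
  have P0: "P > 0" using p0 assms by (simp add: P_def)
  have Q0: "Q > 0" using q0 assms by (simp add: Q_def)
  have rp: "r = p + a * q"
  proof -
    have "p + a * q = ((r - a * s) + a * (s - b * r)) / c"
      by (simp add: p_def q_def eq_p_def eq_q_def c_def add_divide_distrib)
    also have "(r - a * s) + a * (s - b * r) = r * c" by (simp add: c_def algebra_simps)
    finally show ?thesis using c0 by simp
  qed
  have sq: "s = b * p + q"
  proof -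
    have "b * p + q = (b * (r - a * s) + (s - b * r)) / c"
      by (simp add: p_def q_def eq_p_def eq_q_def c_def add_divide_distrib)
    also have "b * (r - a * s) + (s - b * r) = s * c" by (simp add: c_def algebra_simps)
    finally show ?thesis using c0 by simp
  qed
  have PQ4: "P + Q < 4" using h1 by (simp add: P_def Q_def p_def q_def)
  have C2: "2 - P - Q + P * Q * c / 2 > 0" using h2 by (simp add: P_def Q_def p_def q_def c_def)
  define f where "f = Tmap a b r s \<alpha> \<beta>"
  define K where "K = (p, q)"
  have fK: "f K = K" by (simp add: f_def K_def Tmap_eq rp sq)
  have deriv: "(f has_derivative Lmap (1 - P) (- a * P) (- b * Q) (1 - Q)) (at K)"
  proof -
    have fe: "f = (\<lambda>z. (fst z * ((1 - \<alpha>) * exp (r - fst z - a * snd z) + \<alpha>),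
      snd z * ((1 - \<beta>) * exp (s - b * fst z - snd z) + \<beta>)))"
      by (rule ext) (simp add: f_def Tmap_eq)
    show ?thesis unfolding fe
      apply (rule has_derivative_eq_rhs)
       apply (rule derivative_eq_intros refl | simp)+
      apply (rule ext)
      apply (simp add: K_def Lmap_def rp sq P_def Q_def algebra_simps)
      done
  qed
  have der: "\<forall>e>0. \<exists>d>0. \<forall>z. norm (z - K) < d \<longrightarrow>
      norm (f z - K - Lmap (1 - P) (- a * P) (- b * Q) (1 - Q) (z - K)) \<le> e * norm (z - K)"
    using deriv fK unfolding has_derivative_at_alt by simp
  have l12: "- a * P \<noteq> 0" using assms P0 by simp
  have j1: "1 + ((1 - P) * (1 - Q) - (- a * P) * (- b * Q)) - ((1 - P) + (1 - Q)) > 0"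
  proof -
    have "1 + ((1 - P) * (1 - Q) - (- a * P) * (- b * Q)) - ((1 - P) + (1 - Q)) = P * Q * c"
      by (simp add: c_def algebra_simps)
    thus ?thesis using P0 Q0 c0 by simp
  qed
  have j2: "1 + ((1 - P) * (1 - Q) - (- a * P) * (- b * Q)) + ((1 - P) + (1 - Q)) > 0"
  proof -
    have "1 + ((1 - P) * (1 - Q) - (- a * P) * (- b * Q)) + ((1 - P) + (1 - Q)) = 2 * (2 - P - Q + P * Q * c / 2)"
      by (simp add: c_def field_simps)
    thus ?thesis using C2 by simp
  qed
  have j3: "1 - ((1 - P) * (1 - Q) - (- a * P) * (- b * Q)) > 0"
  proof -
    have e: "1 - ((1 - P) * (1 - Q) - (- a * P) * (- b * Q)) = P + Q - P * Q * c"
      by (simp add: c_def algebra_simps)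
    have "P * Q * c < P * Q" using P0 Q0 c0 by simp
    moreover have "4 * (P * Q) \<le> (P + Q)^2"
      using zero_le_power2[of "P - Q"] by (simp add: power2_eq_square algebra_simps)
    moreover have "(P + Q)^2 < 4 * (P + Q)"
    proof -
      have "(P + Q) * (P + Q) < 4 * (P + Q)" using PQ4 P0 Q0 by (intro mult_strict_right_mono) auto
      thus ?thesis by (simp add: power2_eq_square)
    qed
    ultimately have "P * Q * c < P * Q" "4 * (P * Q) < 4 * (P + Q)" by auto
    hence "P * Q * c < P + Q" by simp
    thus ?thesis using e by simp
  qed
  have "loc_asym_stable f K" by (rule stable_from_lin[OF fK der l12 j1 j2 j3])
  thus ?thesis by (simp add: f_def K_def p_def q_def)
qed



lemma partB_arith:
  fixes p q a b \<alpha> \<beta> :: real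
  assumes p0: "p > 0" and q0: "q > 0" and ab0: "0 < a * b" and ab1: "a * b < 1"
    and al: "0 \<le> \<alpha>" "\<alpha> < 1" and be: "0 \<le> \<beta>" "\<beta> < 1"
    and hA: "max (1 - 2 / p) 0 < \<alpha>"
    and hB: "max (1 - 2 / (q * (1 - a * b))
                   - 4 * a * b / (q * (1 - a * b) * ((1 - \<alpha>) * (1 - a * b) * p - 2))) 0 < \<beta>"
  shows "0 \<le> max (1 - 2 / (q * (1 - a * b))
                   - 4 * a * b / (q * (1 - a * b) * ((1 - \<alpha>) * (1 - a * b) * p - 2))) 0
     \<and> max (1 - 2 / (q * (1 - a * b))
                   - 4 * a * b / (q * (1 - a * b) * ((1 - \<alpha>) * (1 - a * b) * p - 2))) 0 < 1
     \<and> (1 - \<alpha>) * p + (1 - \<beta>) * q < 4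
     \<and> 2 - (1 - \<alpha>) * p - (1 - \<beta>) * q + (1 - \<alpha>) * p * ((1 - \<beta>) * q) * (1 - a * b) / 2 > 0"
proof -
  define c where "c = 1 - a * b"
  define P where "P = (1 - \<alpha>) * p"
  define Q where "Q = (1 - \<beta>) * q"
  define E where "E = 1 - 2 / (q * (1 - a * b))
                   - 4 * a * b / (q * (1 - a * b) * ((1 - \<alpha>) * (1 - a * b) * p - 2))"
  have c0: "0 < c" "c < 1" using ab0 ab1 by (auto simp: c_def)
  have "1 - 2 / p < \<alpha>" using hA by simp
  hence "1 - \<alpha> < 2 / p" by simp
  hence P2: "P < 2" using p0 by (simp add: P_def less_divide_eq mult.commute)
  have P0: "P > 0" using p0 al by (simp add: P_def)
  have Pc: "P * c < 2"
  proof -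
    have "P * c < P * 1" using P0 c0 by (intro mult_strict_left_mono) auto
    thus ?thesis using P2 by simp
  qed
  have Q0: "Q > 0" using q0 be by (simp add: Q_def)
  have Z: "(1 - \<alpha>) * (1 - a * b) * p - 2 = P * c - 2" by (simp add: P_def c_def algebra_simps)
  have E': "E = 1 - 2 / (q * c) - 4 * (1 - c) / (q * c * (P * c - 2))"
    unfolding E_def Z by (simp add: c_def mult.assoc)
  have key: "q * (1 - E) = 2 * (2 - P) / (2 - P * c)"
  proof -
    have nz: "q \<noteq> 0" "c \<noteq> 0" "P * c - 2 \<noteq> 0" "2 - P * c \<noteq> 0" using q0 c0 Pc by auto
    show ?thesis unfolding E' using nz by (simp add: field_simps)
  qed
  have EB: "E < \<beta>" using hB by (simp add: E_def)
  have QE: "Q < q * (1 - E)" using EB q0 by (simp add: Q_def)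
  have pos: "0 < 2 - P * c" using Pc by simp
  have QK: "Q * (2 - P * c) < 2 * (2 - P)"
    using QE key pos by (simp add: less_divide_eq)
  have E1: "E < 1"
  proof -
    have "0 < 2 * (2 - P) / (2 - P * c)" using P2 pos by simp
    hence "0 < q * (1 - E)" using key by simp
    thus ?thesis using q0 by (simp add: zero_less_mult_iff)
  qed
  have Q2: "Q < 2"
  proof -
    have "2 * (2 - P) \<le> 2 * (2 - P * c)"
    proof -
      have "P * c \<le> P" using P0 c0 by (simp add: mult_le_cancel_left1)
      thus ?thesis by simp
    qed
    hence "Q * (2 - P * c) < 2 * (2 - P * c)" using QK by linarith
    thus ?thesis using mult_right_less_imp_less[OF _ less_imp_le[OF pos]] by blast
  qed
  have C2: "2 - P - Q + P * Q * c / 2 > 0"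
  proof -
    have "2 - P - Q + P * Q * c / 2 = ((2 * (2 - P)) - Q * (2 - P * c)) / 2" by (simp add: field_simps)
    thus ?thesis using QK by simp
  qed
  show ?thesis
    using E1 P2 Q2 C2 unfolding E_def[symmetric] by (auto simp: P_def Q_def c_def mult.assoc)
qed


theorem mainTheorem5:
  fixes a b r s \<alpha> \<beta> :: real
  assumes "0 < a" "a < 1" "0 < b" "b < 1"
    and "r > a * s" "s > b * r"
    and "0 \<le> \<alpha>" "\<alpha> < 1" "0 \<le> \<beta>" "\<beta> < 1"
  shows
   "(let p = eq_p a b r s; q = eq_q a b r s;
         p\<^sub>\<alpha> = (1 - \<alpha>) * p; q\<^sub>\<beta> = (1 - \<beta>) * q
     in p\<^sub>\<alpha> + q\<^sub>\<beta> < 4 \<and> 2 - p\<^sub>\<alpha> - q\<^sub>\<beta> + p\<^sub>\<alpha> * q\<^sub>\<beta> * (1 - a * b) / 2 > 0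
        \<longrightarrow> loc_asym_stable (Tmap a b r s \<alpha> \<beta>) (p, q))
    \<and>
    (let p = eq_p a b r s; q = eq_q a b r s;
         p\<^sub>\<alpha> = (1 - \<alpha>) * p; q\<^sub>\<beta> = (1 - \<beta>) * q;
         \<alpha>\<^sub>s = max (1 - 2 / p) 0;
         \<beta>\<^sub>s = max (1 - 2 / (q * (1 - a * b))
                   - 4 * a * b / (q * (1 - a * b) * ((1 - \<alpha>) * (1 - a * b) * p - 2))) 0
     in \<alpha>\<^sub>s < \<alpha> \<and> \<beta>\<^sub>s < \<beta>
        \<longrightarrow> 0 \<le> \<beta>\<^sub>s \<and> \<beta>\<^sub>s < 1 \<and>
            p\<^sub>\<alpha> + q\<^sub>\<beta> < 4 \<and> 2 - p\<^sub>\<alpha> - q\<^sub>\<beta> + p\<^sub>\<alpha> * q\<^sub>\<beta> * (1 - a * b) / 2 > 0 \<and>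
            loc_asym_stable (Tmap a b r s \<alpha> \<beta>) (p, q))"
proof -
  have "a * b < 1 * 1" using assms by (intro mult_strict_mono) auto
  hence ab1: "a * b < 1" by simp
  have ab0: "0 < a * b" using assms by simp
  have p0: "eq_p a b r s > 0" using assms ab1 by (simp add: eq_p_def)
  have q0: "eq_q a b r s > 0" using assms ab1 by (simp add: eq_q_def)
  show ?thesis
    unfolding Let_def
  proof (intro conjI impI)
    assume h: "(1 - \<alpha>) * eq_p a b r s + (1 - \<beta>) * eq_q a b r s < 4 \<and>
      2 - (1 - \<alpha>) * eq_p a b r s - (1 - \<beta>) * eq_q a b r s +
      (1 - \<alpha>) * eq_p a b r s * ((1 - \<beta>) * eq_q a b r s) * (1 - a * b) / 2 > 0"
    show "loc_asym_stable (Tmap a b r s \<alpha> \<beta>) (eq_p a b r s, eq_q a b r s)"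
      using partA[OF assms] h by blast
  next
    assume h: "max (1 - 2 / eq_p a b r s) 0 < \<alpha> \<and>
      max (1 - 2 / (eq_q a b r s * (1 - a * b)) -
        4 * a * b / (eq_q a b r s * (1 - a * b) * ((1 - \<alpha>) * (1 - a * b) * eq_p a b r s - 2))) 0 < \<beta>"
    note B = partB_arith[OF p0 q0 ab0 ab1 assms(7-10) conjunct1[OF h] conjunct2[OF h]]
    from B show "0 \<le> max (1 - 2 / (eq_q a b r s * (1 - a * b)) -
        4 * a * b / (eq_q a b r s * (1 - a * b) * ((1 - \<alpha>) * (1 - a * b) * eq_p a b r s - 2))) 0" by blast
    from B show "max (1 - 2 / (eq_q a b r s * (1 - a * b)) -
        4 * a * b / (eq_q a b r s * (1 - a * b) * ((1 - \<alpha>) * (1 - a * b) * eq_p a b r s - 2))) 0 < 1" by blast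
    from B show "(1 - \<alpha>) * eq_p a b r s + (1 - \<beta>) * eq_q a b r s < 4" by blast
    from B show "2 - (1 - \<alpha>) * eq_p a b r s - (1 - \<beta>) * eq_q a b r s +
      (1 - \<alpha>) * eq_p a b r s * ((1 - \<beta>) * eq_q a b r s) * (1 - a * b) / 2 > 0" by blast
    from B show "loc_asym_stable (Tmap a b r s \<alpha> \<beta>) (eq_p a b r s, eq_q a b r s)"
      using partA[OF assms] by blast
  qed
qed

end
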